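(* Let $\mathcal{H}$ be a finite-dimensional complex Hilbert space, let $P$ be a traceless Hermitian operator with $P^2=I$, let $H$ be a Hamiltonian (Hermitian operator) with $[H,P]=0$, and let $A$ and $B$ be Hermitian operators satisfying $\{A,P\} = \{B,P\} = 0$. Let $\rho = |\Psi\rangle\langle\Psi|$ where $|\Psi\rangle$ is a (normalized) eigenstate of $H$ with $P|\Psi\rangle = p|\Psi\rangle$, $p\in\{+1,-1\}$. Then for every real $t$, $$C(A,B,t) = p\, Q\!\left(\rho, \tfrac{P+A}{\sqrt{2}}, B(t)\right) + \mathrm{i}\, Q\!\left(\rho, \tfrac{I+\mathrm{i}A}{\sqrt{2}}, B(t)\right).$$
   Context: For an operator $O$, $O(t) := e^{\mathrm{i}Ht} O e^{-\mathrm{i}Ht}$. The two-point time correlator is $C(A,B,t) := \mathrm{Tr}[\rho\, A\, B(t)]$. The quench function is $Q(\rho,K,M) := \mathrm{Tr}(K\rho K^\dagger M)$ for operators $K$, $M$. $\{X,Y\} = XY+YX$. *)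

theory Defs
  imports "HOL-Analysis.Analysis"
begin

text \<open>Operators on a finite-dimensional complex Hilbert space C^n, represented
  as matrices complex^'n^'n (the dimension is the finite type 'n).\<close>

definition adj :: "complex^'n^'n \<Rightarrow> complex^'n^'n" where
  "adj M = (\<chi> i j. cnj (M $ j $ i))"

definition hermitian :: "complex^'n^'n \<Rightarrow> bool" where
  "hermitian M \<longleftrightarrow> adj M = M"

definition smat :: "complex \<Rightarrow> complex^'n^'n \<Rightarrow> complex^'n^'n" where
  "smat c M = (\<chi> i j. c * M $ i $ j)"

fun matpow :: "complex^'n^'n \<Rightarrow> nat \<Rightarrow> complex^'n^'n" where
  "matpow M 0 = mat 1"
| "matpow M (Suc k) = M ** matpow M k"

definition mexp :: "complex^'n^'n \<Rightarrow> complex^'n^'n" where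
  "mexp M = (\<chi> i j. (\<Sum>k. matpow M k $ i $ j / of_nat (fact k)))"

definition evol :: "complex^'n^'n \<Rightarrow> real \<Rightarrow> complex^'n^'n \<Rightarrow> complex^'n^'n" where
  "evol H t X = mexp (smat (\<i> * of_real t) H) ** X ** mexp (smat (- \<i> * of_real t) H)"

definition corr :: "complex^'n^'n \<Rightarrow> complex^'n^'n \<Rightarrow> complex^'n^'n \<Rightarrow> complex^'n^'n \<Rightarrow> real \<Rightarrow> complex" where
  "corr H \<rho> A B t = trace (\<rho> ** A ** evol H t B)"

definition quench :: "complex^'n^'n \<Rightarrow> complex^'n^'n \<Rightarrow> complex^'n^'n \<Rightarrow> complex" where
  "quench \<rho> K M = trace (K ** \<rho> ** adj K ** M)"

definition proj :: "complex^'n \<Rightarrow> complex^'n^'n" where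
  "proj \<psi> = (\<chi> i j. \<psi> $ i * cnj (\<psi> $ j))"

end

theory Submission
  imports Defs
begin

lemma mm_rdistrib: "((X::complex^'n^'n) + Y) ** Z = X ** Z + Y ** Z"
  by (simp add: matrix_matrix_mult_def vec_eq_iff distrib_right sum.distrib)

lemma mm_uminus_l: "(-(X::complex^'n^'n)) ** Z = -(X ** Z)"
  by (simp add: matrix_matrix_mult_def vec_eq_iff sum_negf)

lemma mm_uminus_r: "(X::complex^'n^'n) ** (-Z) = -(X ** Z)"
  by (simp add: matrix_matrix_mult_def vec_eq_iff sum_negf)

lemma trace_uminus: "trace (-(X::complex^'n^'n)) = - trace X"
  by (simp add: trace_def sum_negf)

lemma smat_mm_l: "smat c (X::complex^'n^'n) ** Y = smat c (X ** Y)"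
  by (simp add: smat_def matrix_matrix_mult_def vec_eq_iff sum_distrib_left mult.assoc)

lemma smat_mm_r: "(X::complex^'n^'n) ** smat c Y = smat c (X ** Y)"
  by (simp add: smat_def matrix_matrix_mult_def vec_eq_iff sum_distrib_left algebra_simps)

lemma smat_smat: "smat a (smat b (X::complex^'n^'n)) = smat (a*b) X"
  by (simp add: smat_def vec_eq_iff)

lemma smat_add: "smat a ((X::complex^'n^'n) + Y) = smat a X + smat a Y"
  by (simp add: smat_def vec_eq_iff distrib_left)

lemma smat_one: "smat 1 (X::complex^'n^'n) = X"
  by (simp add: smat_def vec_eq_iff)

lemma trace_smat: "trace (smat c (X::complex^'n^'n)) = c * trace X"
  by (simp add: smat_def trace_def sum_distrib_left)

lemma adj_smat: "adj (smat c (X::complex^'n^'n)) = smat (cnj c) (adj X)"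
  by (simp add: smat_def adj_def vec_eq_iff)

lemma adj_add: "adj ((X::complex^'n^'n) + Y) = adj X + adj Y"
  by (simp add: adj_def vec_eq_iff)

lemma adj_one: "adj (mat 1 :: complex^'n^'n) = mat 1"
  by (simp add: adj_def mat_def vec_eq_iff)

definition l1 :: "complex^'n^'n \<Rightarrow> real" where
  "l1 X = (\<Sum>i\<in>UNIV. \<Sum>j\<in>UNIV. cmod (X$i$j))"

lemma l1_entry: "cmod (X$i$j) \<le> l1 X"
proof -
  have "cmod (X$i$j) \<le> (\<Sum>j\<in>UNIV. cmod (X$i$j))"
    by (rule member_le_sum) auto
  also have "\<dots> \<le> l1 X" unfolding l1_def
    by (rule member_le_sum[where f="\<lambda>i. \<Sum>j\<in>UNIV. cmod (X$i$j)"]) (auto intro: sum_nonneg)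
  finally show ?thesis .
qed

lemma l1_nonneg: "0 \<le> l1 X"
  unfolding l1_def by (auto intro!: sum_nonneg)

lemma l1_mult: "l1 ((X::complex^'n^'n) ** Y) \<le> l1 X * l1 Y"
proof -
  have "l1 (X ** Y) = (\<Sum>i\<in>UNIV. \<Sum>j\<in>UNIV. cmod (\<Sum>k\<in>UNIV. X$i$k * Y$k$j))"
    by (simp add: l1_def matrix_matrix_mult_def)
  also have "\<dots> \<le> (\<Sum>i\<in>UNIV. \<Sum>j\<in>UNIV. \<Sum>k\<in>UNIV. cmod (X$i$k) * cmod (Y$k$j))"
    by (intro sum_mono, rule order_trans[OF norm_sum]) (simp add: norm_mult)
  also have "\<dots> = (\<Sum>i\<in>UNIV. \<Sum>k\<in>UNIV. \<Sum>j\<in>UNIV. cmod (X$i$k) * cmod (Y$k$j))"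
    by (rule sum.cong[OF refl], rule sum.swap)
  also have "\<dots> = (\<Sum>i\<in>UNIV. \<Sum>k\<in>UNIV. cmod (X$i$k) * (\<Sum>j\<in>UNIV. cmod (Y$k$j)))"
    by (simp only: sum_distrib_left)
  also have "\<dots> \<le> (\<Sum>i\<in>UNIV. \<Sum>k\<in>UNIV. cmod (X$i$k) * l1 Y)"
  proof (intro sum_mono mult_left_mono)
    fix k
    show "(\<Sum>j\<in>UNIV. cmod (Y$k$j)) \<le> l1 Y" unfolding l1_def
      by (rule member_le_sum[where f="\<lambda>i. \<Sum>j\<in>UNIV. cmod (Y$i$j)"]) (auto intro: sum_nonneg)
  qed auto
  also have "\<dots> = l1 X * l1 Y"
    by (simp add: l1_def sum_distrib_right)
  finally show ?thesis .
qed

lemma l1_matpow: "l1 (matpow (X::complex^'n^'n) m) \<le> l1 X ^ m * l1 (mat 1 :: complex^'n^'n)"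
proof (induction m)
  case 0 then show ?case by simp
next
  case (Suc m)
  have "l1 (matpow X (Suc m)) \<le> l1 X * l1 (matpow X m)" using l1_mult by simp
  also have "\<dots> \<le> l1 X * (l1 X ^ m * l1 (mat 1 :: complex^'n^'n))"
    using Suc l1_nonneg by (intro mult_left_mono) auto
  finally show ?case by (simp add: mult_ac)
qed

lemma summable_entry: "summable (\<lambda>m. matpow (X::complex^'n^'n) m $ i $ j / of_nat (fact m))"
proof (rule summable_norm_cancel, rule summable_comparison_test)
  let ?C = "l1 (mat 1 :: complex^'n^'n)"
  show "\<exists>N. \<forall>n\<ge>N. norm (norm (matpow X n $ i $ j / of_nat (fact n))) \<le> ?C * (inverse (fact n) * l1 X ^ n)"
  proof (intro exI allI impI)
    fix n :: nat
    have "cmod (matpow X n $ i $ j) \<le> l1 X ^ n * ?C"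
      using l1_entry l1_matpow order_trans by blast
    then have "cmod (matpow X n $ i $ j) / fact n \<le> (l1 X ^ n * ?C) / fact n"
      by (intro divide_right_mono) auto
    moreover have "norm (norm (matpow X n $ i $ j / of_nat (fact n))) = cmod (matpow X n $ i $ j) / fact n"
      by (simp add: norm_divide)
    moreover have "(l1 X ^ n * ?C) / fact n = ?C * (inverse (fact n) * l1 X ^ n)"
      by (simp add: field_simps)
    ultimately show "norm (norm (matpow X n $ i $ j / of_nat (fact n))) \<le> ?C * (inverse (fact n) * l1 X ^ n)"
      by simp
  qed
  show "summable (\<lambda>n. ?C * (inverse (fact n) * l1 X ^ n))"
    by (intro summable_mult summable_exp)
qed

lemma sum_suminf_swap:
  assumes "\<And>k. summable (f k)"
  shows "(\<Sum>k\<in>(UNIV::'n::finite set). c k * suminf (f k)) = (\<Sum>m. \<Sum>k\<in>UNIV. c k * (f k m :: complex))"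
proof -
  have "(\<Sum>k\<in>(UNIV::'n set). c k * suminf (f k)) = (\<Sum>k\<in>UNIV. (\<Sum>m. c k * f k m))"
    using assms by (simp add: suminf_mult)
  also have "\<dots> = (\<Sum>m. \<Sum>k\<in>UNIV. c k * f k m)"
    using assms by (intro suminf_sum[symmetric] summable_mult)
  finally show ?thesis .
qed

lemma sum_suminf_swap2:
  assumes "\<And>k. summable (f k)"
  shows "(\<Sum>k\<in>(UNIV::'n::finite set). suminf (f k) * c k) = (\<Sum>m. \<Sum>k\<in>UNIV. (f k m :: complex) * c k)"
  using sum_suminf_swap[of f c, OF assms] by (simp add: mult.commute)

lemma matpow_comm: "P ** X = X ** P \<Longrightarrow> P ** matpow X m = matpow X m ** P"
  by (induction m) (simp_all add: matrix_mul_assoc, metis matrix_mul_assoc)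

lemma mexp_comm:
  assumes "P ** X = X ** P"
  shows "P ** mexp X = mexp X ** P"
proof -
  have "(P ** mexp X) $ i $ j = (mexp X ** P) $ i $ j" for i j
  proof -
    have "(P ** mexp X) $ i $ j = (\<Sum>m. \<Sum>k\<in>UNIV. P$i$k * (matpow X m $ k $ j / of_nat (fact m)))"
      unfolding matrix_matrix_mult_def mexp_def vec_lambda_beta
      by (rule sum_suminf_swap[of "\<lambda>k m. matpow X m $ k $ j / of_nat (fact m)" "\<lambda>k. P$i$k"])
         (rule summable_entry)
    also have "\<dots> = (\<Sum>m. (P ** matpow X m) $ i $ j / of_nat (fact m))"
      by (simp add: matrix_matrix_mult_def sum_divide_distrib)
    also have "\<dots> = (\<Sum>m. (matpow X m ** P) $ i $ j / of_nat (fact m))"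
      using matpow_comm[OF assms] by simp
    also have "\<dots> = (\<Sum>m. \<Sum>k\<in>UNIV. (matpow X m $ i $ k / of_nat (fact m)) * P$k$j)"
      by (simp add: matrix_matrix_mult_def sum_divide_distrib)
    also have "\<dots> = (mexp X ** P) $ i $ j"
      unfolding matrix_matrix_mult_def mexp_def vec_lambda_beta
      by (rule sum_suminf_swap2[of "\<lambda>k m. matpow X m $ i $ k / of_nat (fact m)" "\<lambda>k. P$k$j", symmetric])
         (rule summable_entry)
    finally show ?thesis .
  qed
  then show ?thesis by (simp add: vec_eq_iff)
qed


lemma tr0:
  fixes r P Y :: "complex^'n^'n"
  assumes rP: "r ** P = smat p r" and Pr: "P ** r = smat p r" and pp: "p * p = 1"
    and P2: "P ** P = mat 1" and YP: "Y ** P = -(P ** Y)"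
  shows "trace (r ** Y) = 0"
proof -
  have "(r ** P) ** (P ** Y) = r ** (P ** (P ** Y))" by (simp only: matrix_mul_assoc)
  also have "\<dots> = r ** Y" by (simp only: matrix_mul_assoc[of P P Y] P2 matrix_mul_lid)
  finally have "trace (r ** Y) = trace ((r ** P) ** (P ** Y))" by simp
  also have "\<dots> = p * trace (r ** (P ** Y))" by (simp add: rP smat_mm_l trace_smat)
  also have "\<dots> = - p * trace ((r ** Y) ** P)"
  proof -
    have "P ** Y = -(Y ** P)" using YP by (simp add: minus_equation_iff)
    then have "r ** (P ** Y) = -((r ** Y) ** P)" by (simp only: mm_uminus_r matrix_mul_assoc)
    then show ?thesis by (simp only: trace_uminus) simp
  qed
  also have "\<dots> = - p * trace ((P ** r) ** Y)"
  proof -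
    have "trace ((r ** Y) ** P) = trace (P ** (r ** Y))" by (rule trace_mul_sym)
    then show ?thesis by (simp only: matrix_mul_assoc)
  qed
  also have "\<dots> = - (p * p) * trace (r ** Y)" by (simp add: Pr smat_mm_l trace_smat)
  finally have "trace (r ** Y) = - trace (r ** Y)" using pp by simp
  then show ?thesis by simp
qed

lemma fin: fixes p b x :: complex assumes pp: "p*p = 1"
  shows "b = p * (1/2 * (p * p * 0 + p * b + p * x + 0)) + \<i> * (1/2 * (0 + - \<i> * b + \<i> * x + 0))"
proof -
  have "p * (1/2 * (p * p * 0 + p * b + p * x + 0)) = (p*p) * (b + x) / 2" by (simp add: algebra_simps)
  moreover have "\<i> * (1/2 * (0 + - \<i> * b + \<i> * x + 0)) = (b - x)/2" by (simp add: algebra_simps)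
  ultimately show ?thesis using pp by (simp add: field_simps)
qed

lemma comm_smat: "P ** H = H ** P \<Longrightarrow> P ** smat c H = smat c H ** P"
  by (simp add: smat_mm_l smat_mm_r)

theorem theorem1:
  fixes P H A B :: "complex^'n^'n" and \<psi> :: "complex^'n" and p E :: complex and t :: real
  assumes hP: "hermitian P" and trP: "trace P = 0" and P2: "P ** P = mat 1"
    and hH: "hermitian H" and HP: "H ** P = P ** H"
    and hA: "hermitian A" and hB: "hermitian B"
    and AP: "A ** P + P ** A = 0" and BP: "B ** P + P ** B = 0"
    and nrm: "norm \<psi> = 1"
    and eig: "H *v \<psi> = E *s \<psi>"
    and par: "P *v \<psi> = p *s \<psi>" and p: "p = 1 \<or> p = -1"
  shows "corr H (proj \<psi>) A B t =
           p * quench (proj \<psi>) (smat (1 / sqrt 2) (P + A)) (evol H t B)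
         + \<i> * quench (proj \<psi>) (smat (1 / sqrt 2) (mat 1 + smat \<i> A)) (evol H t B)"
proof -
  define r where "r = proj \<psi>"
  define M where "M = evol H t B"
  define c :: complex where "c = 1 / sqrt 2"
  have cc: "c * c = 1/2" unfolding c_def
    by (simp add: field_simps flip: of_real_mult)
  have cnjc: "cnj c = c" unfolding c_def by simp
  have pp: "p * p = 1" and cnjp: "cnj p = p" using p by auto
  have parI: "(\<Sum>k\<in>UNIV. P$i$k * \<psi>$k) = p * \<psi>$i" for i
    using arg_cong[OF par, of "\<lambda>v. v $ i"] by (simp add: matrix_vector_mult_def)
  have Pent: "cnj (P$j$k) = P$k$j" for j k
    using hP unfolding hermitian_def adj_def by (metis vec_lambda_beta)
  have Pr: "P ** r = smat p r"
  proof -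
    have "(P ** r)$i$j = (smat p r)$i$j" for i j
    proof -
      have "(P ** r)$i$j = (\<Sum>k\<in>UNIV. P$i$k * \<psi>$k) * cnj (\<psi>$j)"
        by (simp add: r_def proj_def matrix_matrix_mult_def sum_distrib_right mult.assoc)
      then show ?thesis by (simp add: parI smat_def r_def proj_def mult.assoc)
    qed
    then show ?thesis by (simp add: vec_eq_iff)
  qed
  have rP: "r ** P = smat p r"
  proof -
    have "(r ** P)$i$j = (smat p r)$i$j" for i j
    proof -
      have "(r ** P)$i$j = \<psi>$i * cnj (\<Sum>k\<in>UNIV. P$j$k * \<psi>$k)"
        by (simp add: r_def proj_def matrix_matrix_mult_def sum_distrib_left Pent mult_ac)
      also have "\<dots> = \<psi>$i * cnj (p * \<psi>$j)" by (simp add: parI)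
      finally show ?thesis by (simp add: cnjp smat_def r_def proj_def mult_ac)
    qed
    then show ?thesis by (simp add: vec_eq_iff)
  qed
  have XrP: "X ** r ** P = smat p (X ** r)" for X
    by (simp add: matrix_mul_assoc[symmetric] rP smat_mm_r)
  have BP': "B ** P = -(P ** B)" using BP by (simp add: eq_neg_iff_add_eq_0)
  have AP': "A ** P = -(P ** A)" using AP by (simp add: eq_neg_iff_add_eq_0)
  define E1 where "E1 = mexp (smat (\<i> * of_real t) H)"
  define E2 where "E2 = mexp (smat (- \<i> * of_real t) H)"
  have PE1: "P ** E1 = E1 ** P" unfolding E1_def
    by (rule mexp_comm, rule comm_smat) (use HP in simp)
  have PE2: "P ** E2 = E2 ** P" unfolding E2_def
    by (rule mexp_comm, rule comm_smat) (use HP in simp)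
  have Mdef: "M = E1 ** B ** E2" by (simp only: M_def evol_def E1_def E2_def)
  have MP: "M ** P = -(P ** M)"
  proof -
    have "M ** P = E1 ** ((B ** P) ** E2)"
      by (simp only: Mdef matrix_mul_assoc[symmetric] PE2[symmetric])
    also have "\<dots> = -(E1 ** ((P ** B) ** E2))" by (simp only: BP' mm_uminus_l mm_uminus_r)
    also have "E1 ** ((P ** B) ** E2) = P ** M" by (simp only: Mdef matrix_mul_assoc PE1)
    finally show ?thesis .
  qed
  have AMAP: "(A ** M ** A) ** P = -(P ** (A ** M ** A))"
  proof -
    have "(A ** M ** A) ** P = A ** (M ** (A ** P))" by (simp only: matrix_mul_assoc[symmetric])
    also have "\<dots> = -(A ** (M ** (P ** A)))" by (simp only: AP' mm_uminus_r)
    also have "A ** (M ** (P ** A)) = A ** ((M ** P) ** A)" by (simp only: matrix_mul_assoc[symmetric])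
    also have "\<dots> = -(A ** ((P ** M) ** A))" by (simp only: MP mm_uminus_l mm_uminus_r)
    also have "A ** ((P ** M) ** A) = (A ** P) ** (M ** A)" by (simp only: matrix_mul_assoc[symmetric])
    also have "\<dots> = -(P ** (A ** M ** A))" by (simp only: AP' mm_uminus_l matrix_mul_assoc[symmetric])
    finally show ?thesis by simp
  qed
  have t1: "trace (r ** M) = 0" by (rule tr0[OF rP Pr pp P2 MP])
  have t4: "trace (A ** r ** A ** M) = 0"
  proof -
    have "trace (A ** r ** A ** M) = trace (A ** (r ** A ** M))" by (simp add: matrix_mul_assoc)
    also have "\<dots> = trace ((r ** A ** M) ** A)" by (rule trace_mul_sym)
    also have "\<dots> = trace (r ** (A ** M ** A))" by (simp only: matrix_mul_assoc)
    also have "\<dots> = 0" by (rule tr0[OF rP Pr pp P2 AMAP])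
    finally show ?thesis .
  qed
  have adjP: "adj P = P" and adjA: "adj A = A" using hP hA by (simp_all add: hermitian_def)
  have K1: "adj (smat c (P + A)) = smat c (P + A)"
    by (simp only: adj_smat adj_add adjP adjA cnjc)
  have K2: "adj (smat c (mat 1 + smat \<i> A)) = smat c (mat 1 + smat (- \<i>) A)"
    by (simp add: adj_smat adj_add adj_one adjA cnjc)
  have e1: "(P + A) ** r ** (P + A) = smat (p*p) r + smat p (r ** A) + smat p (A ** r) + A ** r ** A"
  proof -
    have "(P + A) ** r = smat p r + A ** r" by (simp only: mm_rdistrib Pr)
    then have "(P + A) ** r ** (P + A) = (smat p r + A ** r) ** (P + A)" by simp
    also have "\<dots> = smat p r ** P + smat p r ** A + (A ** r ** P + A ** r ** A)"
      by (simp only: mm_rdistrib matrix_add_ldistrib add_ac)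
    also have "\<dots> = smat (p*p) r + smat p (r ** A) + smat p (A ** r) + A ** r ** A"
      by (simp only: smat_mm_l rP XrP smat_smat add.assoc)
    finally show ?thesis .
  qed
  have e2: "(mat 1 + smat \<i> A) ** r ** (mat 1 + smat (- \<i>) A)
      = r + smat (- \<i>) (r ** A) + smat \<i> (A ** r) + A ** r ** A"
  proof -
    have "(mat 1 + smat \<i> A) ** r = r + smat \<i> (A ** r)" by (simp only: mm_rdistrib smat_mm_l matrix_mul_lid)
    then have "(mat 1 + smat \<i> A) ** r ** (mat 1 + smat (- \<i>) A)
        = (r + smat \<i> (A ** r)) ** (mat 1 + smat (- \<i>) A)" by simp
    also have "\<dots> = r + smat (- \<i>) (r ** A) + (smat \<i> (A ** r) + smat (- \<i> * \<i>) (A ** r ** A))"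
      by (simp only: mm_rdistrib matrix_add_ldistrib smat_mm_l smat_mm_r smat_smat matrix_mul_rid
          smat_add add_ac)
    also have "\<dots> = r + smat (- \<i>) (r ** A) + smat \<i> (A ** r) + A ** r ** A"
    proof -
      have "- \<i> * \<i> = 1" by simp
      then show ?thesis by (simp only: smat_one add_ac)
    qed
    finally show ?thesis .
  qed
  have Q1: "quench r (smat c (P + A)) M
      = c * c * (p * p * trace (r ** M) + p * trace (r ** A ** M) + p * trace (A ** r ** M)
          + trace (A ** r ** A ** M))"
  proof -
    have "quench r (smat c (P + A)) M = trace (smat (c*c) ((P + A) ** r ** (P + A) ** M))"
      unfolding quench_def K1 by (simp only: smat_mm_l smat_mm_r smat_smat)
    also have "\<dots> = c * c * (p * p * trace (r ** M) + p * trace (r ** A ** M) + p * trace (A ** r ** M)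
          + trace (A ** r ** A ** M))"
      unfolding e1 by (simp only: trace_smat mm_rdistrib smat_mm_l trace_add)
    finally show ?thesis .
  qed
  have Q2: "quench r (smat c (mat 1 + smat \<i> A)) M
      = c * c * (trace (r ** M) + - \<i> * trace (r ** A ** M) + \<i> * trace (A ** r ** M)
          + trace (A ** r ** A ** M))"
  proof -
    have "quench r (smat c (mat 1 + smat \<i> A)) M
        = trace (smat (c*c) ((mat 1 + smat \<i> A) ** r ** (mat 1 + smat (- \<i>) A) ** M))"
      unfolding quench_def K2 by (simp only: smat_mm_l smat_mm_r smat_smat)
    also have "\<dots> = c * c * (trace (r ** M) + - \<i> * trace (r ** A ** M) + \<i> * trace (A ** r ** M)
          + trace (A ** r ** A ** M))"
      unfolding e2 by (simp only: trace_smat mm_rdistrib smat_mm_l trace_add)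
    finally show ?thesis .
  qed
  have "corr H r A B t = trace (r ** A ** M)" by (simp add: corr_def M_def)
  also have "\<dots> = p * quench r (smat c (P + A)) M + \<i> * quench r (smat c (mat 1 + smat \<i> A)) M"
    unfolding Q1 Q2 t1 t4 cc by (rule fin[OF pp])
  finally show ?thesis unfolding r_def M_def c_def .
qed

end
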